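(* Let $r\ge 2$, $d\ge 1$ be integers and $n=(r-1)d+1$. Let $F_1,\ldots,F_n\subset\mathbb{R}^d$ be pairwise disjoint sets, each of cardinality $r$, such that the coordinates of all points of $F_1\cup\cdots\cup F_n$ are algebraically independent, and let $M\subset[n]$. Then there is a colourful partition $A_1,\ldots,A_r$ of $F_1\cup\cdots\cup F_n$ (so $|F_i\cap A_j|=1$; write $F_i\cap A_j=\{x_{i,j}\}$), a point $z\in\mathbb{R}^d$ and real numbers $\alpha_1,\ldots,\alpha_n$ such that \[ z=\sum_{i=1}^n\alpha_i\,x_{i,j}\quad\text{and}\quad \sum_{i=1}^n\alpha_i=1\qquad\text{for all } j\in[r], \] and either ($\alpha_i>0$ for all $i\in M$ and $\alpha_i<0$ for all $i\in[n]\setminus M$) or ($\alpha_i<0$ for all $i\in M$ and $\alpha_i>0$ for all $i\in[n]\setminus M$). In particular the coefficient of $x_{i,j}$ in the affine combination for $A_j$ is $\alpha_i$, independent of $j$.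
   Context: $[n]=\{1,\ldots,n\}$. The sets $F_i$ are regarded as colour classes; a colourful partition of them into $r$ sets is a partition $A_1,\ldots,A_r$ of $F_1\cup\cdots\cup F_n$ with $|F_i\cap A_j|=1$ for all $i\in[n]$, $j\in[r]$. *)

theory Defs
  imports "HOL-Analysis.Analysis"
begin

text \<open>A polynomial is a finitely supported function
  from monomials (exponent vectors supported in I) to coefficients.\<close>
definition alg_indep :: "'i set \<Rightarrow> ('i \<Rightarrow> real) \<Rightarrow> bool" where
  "alg_indep I x \<longleftrightarrow>
     (\<forall>p :: ('i \<Rightarrow> nat) \<Rightarrow> rat.
        finite {m. p m \<noteq> 0}
        \<and> (\<forall>m. p m \<noteq> 0 \<longrightarrow> (\<forall>i. i \<notin> I \<longrightarrow> m i = 0))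
        \<and> (\<Sum>m\<in>{m. p m \<noteq> 0}. of_rat (p m) * (\<Prod>i\<in>I. x i ^ m i)) = 0
        \<longrightarrow> (\<forall>m. p m = 0))"

definition colourful_partition ::
  "nat \<Rightarrow> nat \<Rightarrow> (nat \<Rightarrow> 'a set) \<Rightarrow> (nat \<Rightarrow> 'a set) \<Rightarrow> bool" where
  "colourful_partition n r F A \<longleftrightarrow>
     (\<Union>j\<in>{1..r}. A j) = (\<Union>i\<in>{1..n}. F i)
     \<and> (\<forall>j\<in>{1..r}. \<forall>j'\<in>{1..r}. j \<noteq> j' \<longrightarrow> A j \<inter> A j' = {})
     \<and> (\<forall>i\<in>{1..n}. \<forall>j\<in>{1..r}. card (F i \<inter> A j) = 1)"

end

theory Submission
  imports Defs "Jordan_Normal_Form.Determinant"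
begin

no_notation vec_index (infixl "$" 100)

definition mono :: "'i set \<Rightarrow> ('i \<Rightarrow> nat) \<Rightarrow> ('i \<Rightarrow> real) \<Rightarrow> real" where
  "mono I m y = (\<Prod>i\<in>I. y i ^ m i)"

definition polyfun :: "'i set \<Rightarrow> (('i \<Rightarrow> real) \<Rightarrow> real) \<Rightarrow> bool" where
  "polyfun I f \<longleftrightarrow> (\<exists>L. (\<forall>cm\<in>set L. \<forall>i. i \<notin> I \<longrightarrow> snd cm i = 0) \<and>
     (\<forall>y. f y = (\<Sum>cm\<leftarrow>L. of_rat (fst cm) * mono I (snd cm) y)))"

definition coef :: "(rat \<times> ('i \<Rightarrow> nat)) list \<Rightarrow> ('i \<Rightarrow> nat) \<Rightarrow> rat" where
  "coef L m = (\<Sum>cm\<leftarrow>L. if snd cm = m then fst cm else 0)"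

lemma coef_eval:
  "finite S \<Longrightarrow> snd ` set L \<subseteq> S \<Longrightarrow>
   (\<Sum>m\<in>S. of_rat (coef L m) * mono I m y) = (\<Sum>cm\<leftarrow>L. of_rat (fst cm) * mono I (snd cm) y)"
proof (induction L)
  case Nil
  then show ?case by (simp add: coef_def)
next
  case (Cons a L)
  have c: "coef (a # L) m = (if snd a = m then fst a else 0) + coef L m" for m
    by (simp add: coef_def)
  have "(\<Sum>m\<in>S. of_rat (coef (a # L) m) * mono I m y)
     = (\<Sum>m\<in>S. (if snd a = m then of_rat (fst a) * mono I m y else 0)) + (\<Sum>m\<in>S. of_rat (coef L m) * mono I m y)"
    unfolding sum.distrib[symmetric] by (rule sum.cong) (auto simp: c of_rat_add distrib_right)
  also have "(\<Sum>m\<in>S. (if snd a = m then of_rat (fst a) * mono I m y else 0)) = of_rat (fst a) * mono I (snd a) y"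
    using Cons.prems by (simp add: sum.delta)
  finally show ?case using Cons by simp
qed

lemma coef_supp: "coef L m \<noteq> 0 \<Longrightarrow> m \<in> snd ` set L"
  by (induction L) (auto simp: coef_def split: if_splits)

lemma polyfun_zero:
  assumes "polyfun I f" "alg_indep I x" "f x = 0"
  shows "f y = 0"
proof -
  obtain L where L: "\<forall>cm\<in>set L. \<forall>i. i \<notin> I \<longrightarrow> snd cm i = 0"
    "\<And>y. f y = (\<Sum>cm\<leftarrow>L. of_rat (fst cm) * mono I (snd cm) y)"
    using assms(1) unfolding polyfun_def by blast
  let ?S = "snd ` set L"
  have sub: "{m. coef L m \<noteq> 0} \<subseteq> ?S" using coef_supp by blast
  have fin: "finite {m. coef L m \<noteq> 0}" using sub finite_subset by blast
  have ev: "f z = (\<Sum>m\<in>{m. coef L m \<noteq> 0}. of_rat (coef L m) * mono I m z)" for z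
  proof -
    have "(\<Sum>m\<in>{m. coef L m \<noteq> 0}. of_rat (coef L m) * mono I m z) = (\<Sum>m\<in>?S. of_rat (coef L m) * mono I m z)"
      by (rule sum.mono_neutral_left) (use sub in auto)
    also have "\<dots> = f z" using coef_eval[of ?S L I z] L(2) by simp
    finally show ?thesis by simp
  qed
  have supp: "\<forall>m. coef L m \<noteq> 0 \<longrightarrow> (\<forall>i. i \<notin> I \<longrightarrow> m i = 0)"
    using coef_supp L(1) by fastforce
  have imp: "finite {m. coef L m \<noteq> 0} \<and> (\<forall>m. coef L m \<noteq> 0 \<longrightarrow> (\<forall>i. i \<notin> I \<longrightarrow> m i = 0))
        \<and> (\<Sum>m\<in>{m. coef L m \<noteq> 0}. of_rat (coef L m) * (\<Prod>i\<in>I. x i ^ m i)) = 0 \<longrightarrow> (\<forall>m. coef L m = 0)"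
    using assms(2) unfolding alg_indep_def by blast
  have "\<forall>m. coef L m = 0"
    using imp fin supp ev[of x] assms(3) unfolding mono_def by auto
  then show ?thesis using ev[of y] by simp
qed

lemma polyfun_const: "polyfun I (\<lambda>y. of_rat c)"
  unfolding polyfun_def
  by (rule exI[of _ "[(c, \<lambda>_. 0)]"]) (simp add: mono_def)

lemma polyfun_var: assumes "finite I" "i \<in> I" shows "polyfun I (\<lambda>y. y i)"
  unfolding polyfun_def
proof (rule exI[of _ "[(1, \<lambda>j. if j = i then 1 else 0)]"], intro conjI allI)
  fix y :: "'a \<Rightarrow> real"
  have "mono I (\<lambda>j. if j = i then 1 else 0) y = (\<Prod>j\<in>I. if j = i then y j else 1)"
    unfolding mono_def by (rule prod.cong) auto
  also have "\<dots> = y i" using assms by (simp add: prod.delta)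
  finally show "y i = (\<Sum>cm\<leftarrow>[(1, \<lambda>j. if j = i then 1 else 0)]. of_rat (fst cm) * mono I (snd cm) y)" by simp
qed (use assms in auto)

lemma polyfun_add: "polyfun I f \<Longrightarrow> polyfun I g \<Longrightarrow> polyfun I (\<lambda>y. f y + g y)"
  unfolding polyfun_def
  apply (elim exE conjE)
  subgoal for L1 L2 by (rule exI[of _ "L1 @ L2"]) auto
  done

lemma mono_add: "finite I \<Longrightarrow> mono I (\<lambda>i. m i + m' i) y = mono I m y * mono I m' y"
  unfolding mono_def by (simp add: power_add prod.distrib)

lemma polyfun_mono_mult:
  assumes "finite I" "polyfun I f" "\<forall>i. i \<notin> I \<longrightarrow> m i = 0"
  shows "polyfun I (\<lambda>y. of_rat c * mono I m y * f y)"
proof -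
  obtain L where L: "\<forall>cm\<in>set L. \<forall>i. i \<notin> I \<longrightarrow> snd cm i = 0"
    "\<And>y. f y = (\<Sum>cm\<leftarrow>L. of_rat (fst cm) * mono I (snd cm) y)"
    using assms(2) unfolding polyfun_def by blast
  show ?thesis unfolding polyfun_def
  proof (rule exI[of _ "map (\<lambda>cm. (c * fst cm, \<lambda>i. m i + snd cm i)) L"], intro conjI allI)
    fix y
    have "of_rat c * mono I m y * f y = (\<Sum>cm\<leftarrow>L. (of_rat c * mono I m y) * (of_rat (fst cm) * mono I (snd cm) y))"
      unfolding L(2) by (simp add: sum_list_const_mult)
    also have "\<dots> = (\<Sum>cm\<leftarrow>L. of_rat (c * fst cm) * mono I (\<lambda>i. m i + snd cm i) y)"
      by (rule arg_cong[where f=sum_list], rule map_cong)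
         (auto simp: mono_add[OF assms(1)] of_rat_mult algebra_simps)
    finally show "of_rat c * mono I m y * f y = (\<Sum>cm\<leftarrow>map (\<lambda>cm. (c * fst cm, \<lambda>i. m i + snd cm i)) L. of_rat (fst cm) * mono I (snd cm) y)"
      by (simp add: o_def)
  qed (use L(1) assms(3) in auto)
qed

lemma polyfun_mult:
  assumes "finite I" "polyfun I f" "polyfun I g"
  shows "polyfun I (\<lambda>y. f y * g y)"
proof -
  obtain L where L: "\<forall>cm\<in>set L. \<forall>i. i \<notin> I \<longrightarrow> snd cm i = 0"
    "\<And>y. f y = (\<Sum>cm\<leftarrow>L. of_rat (fst cm) * mono I (snd cm) y)"
    using assms(2) unfolding polyfun_def by blast
  have "polyfun I (\<lambda>y. (\<Sum>cm\<leftarrow>L. of_rat (fst cm) * mono I (snd cm) y) * g y)"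
    using L(1)
  proof (induction L)
    case Nil
    then show ?case using polyfun_const[of I 0] by simp
  next
    case (Cons a L)
    have "polyfun I (\<lambda>y. of_rat (fst a) * mono I (snd a) y * g y + (\<Sum>cm\<leftarrow>L. of_rat (fst cm) * mono I (snd cm) y) * g y)"
      by (rule polyfun_add) (use Cons polyfun_mono_mult[OF assms(1) assms(3)] in auto)
    then show ?case by (simp add: algebra_simps)
  qed
  then show ?thesis using L(2) by simp
qed

lemma polyfun_cmult: "finite I \<Longrightarrow> polyfun I f \<Longrightarrow> polyfun I (\<lambda>y. of_rat c * f y)"
  using polyfun_mult[OF _ polyfun_const] by blast

lemma polyfun_diff: "finite I \<Longrightarrow> polyfun I f \<Longrightarrow> polyfun I g \<Longrightarrow> polyfun I (\<lambda>y. f y - g y)"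
  using polyfun_add[of I f "\<lambda>y. of_rat (-1) * g y"] polyfun_cmult[of I g "-1"] by (simp add: of_rat_minus)

lemma polyfun_sum: "finite A \<Longrightarrow> finite I \<Longrightarrow> (\<And>a. a \<in> A \<Longrightarrow> polyfun I (f a)) \<Longrightarrow> polyfun I (\<lambda>y. \<Sum>a\<in>A. f a y)"
proof (induction A rule: finite_induct)
  case empty
  then show ?case using polyfun_const[of I 0] by simp
next
  case (insert x F)
  then show ?case using polyfun_add[of I "f x" "\<lambda>y. \<Sum>a\<in>F. f a y"] by simp
qed

lemma polyfun_prod: "finite A \<Longrightarrow> finite I \<Longrightarrow> (\<And>a. a \<in> A \<Longrightarrow> polyfun I (f a)) \<Longrightarrow> polyfun I (\<lambda>y. \<Prod>a\<in>A. f a y)"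
proof (induction A rule: finite_induct)
  case empty
  then show ?case using polyfun_const[of I 1] by simp
next
  case (insert x F)
  then show ?case using polyfun_mult[of I "f x" "\<lambda>y. \<Prod>a\<in>F. f a y"] by simp
qed

lemma polyfun_det:
  assumes "finite I" "\<And>a b. a < m \<Longrightarrow> b < m \<Longrightarrow> polyfun I (E a b)"
  shows "polyfun I (\<lambda>y. det (Matrix.mat m m (\<lambda>(a,b). E a b y)))"
proof -
  have eq: "det (Matrix.mat m m (\<lambda>(a,b). E a b y)) =
     (\<Sum>p\<in>{p. p permutes {0..<m}}. of_rat (of_int (sign p)) * (\<Prod>i\<in>{0..<m}. E i (p i) y))" for y
    unfolding det_def'[OF mat_carrier]
  proof (rule sum.cong[OF refl])
    fix p assume "p \<in> {p. p permutes {0..<m}}"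
    then have "i < m \<Longrightarrow> p i < m" for i using permutes_in_image by fastforce
    then show "signof p * (\<Prod>i = 0..<m. Matrix.mat m m (\<lambda>(a, b). E a b y) $$ (i, p i)) =
         of_rat (of_int (sign p)) * (\<Prod>i\<in>{0..<m}. E i (p i) y)"
      by (simp add: of_rat_of_int_eq)
  qed
  have "polyfun I (\<lambda>y. \<Sum>p\<in>{p. p permutes {0..<m}}. of_rat (of_int (sign p)) * (\<Prod>i\<in>{0..<m}. E i (p i) y))"
    apply (rule polyfun_sum[OF _ assms(1)])
     apply (simp add: finite_permutations)
    apply (rule polyfun_cmult[OF assms(1)])
    apply (rule polyfun_prod[OF _ assms(1)])
     apply simp
    apply (rule assms(2))
     apply simp
    apply (simp add: permutes_in_image)
    done
  then show ?thesis unfolding eq .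
qed

lemma det_nz_iff:
  fixes A :: "real mat"
  assumes A: "A \<in> carrier_mat m m"
  shows "det A \<noteq> 0 \<longleftrightarrow> (\<forall>u. (\<forall>a<m. (\<Sum>b<m. A $$ (a,b) * u b) = 0) \<longrightarrow> (\<forall>b<m. u b = 0))"
proof -
  have mv: "(A *\<^sub>v v) = 0\<^sub>v m \<longleftrightarrow> (\<forall>a<m. (\<Sum>b<m. A $$ (a,b) * vec_index v b) = 0)" if "v \<in> carrier_vec m" for v
  proof -
    have "vec_index (A *\<^sub>v v) a = (\<Sum>b<m. A $$ (a,b) * vec_index v b)" if "a < m" for a
      using A that \<open>v \<in> carrier_vec m\<close>
      by (simp add: scalar_prod_def atLeast0LessThan)
    then show ?thesis using A that by (auto simp: vec_eq_iff)
  qed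
  show ?thesis
  proof
    assume d: "det A \<noteq> 0"
    show "\<forall>u. (\<forall>a<m. (\<Sum>b<m. A $$ (a,b) * u b) = 0) \<longrightarrow> (\<forall>b<m. u b = 0)"
    proof (rule allI, rule impI)
      fix u assume k: "\<forall>a<m. (\<Sum>b<m. A $$ (a,b) * u b) = 0"
      let ?v = "Matrix.vec m u"
      have "A *\<^sub>v ?v = 0\<^sub>v m" using mv[of ?v] k by simp
      moreover have "?v \<in> carrier_vec m" by simp
      ultimately have "?v = 0\<^sub>v m" using d det_0_iff_vec_prod_zero_field[OF A] by blast
      then show "\<forall>b<m. u b = 0" by (auto simp: vec_eq_iff)
    qed
  next
    assume k: "\<forall>u. (\<forall>a<m. (\<Sum>b<m. A $$ (a,b) * u b) = 0) \<longrightarrow> (\<forall>b<m. u b = 0)"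
    show "det A \<noteq> 0"
    proof
      assume "det A = 0"
      then obtain v where v: "v \<in> carrier_vec m" "v \<noteq> 0\<^sub>v m" "A *\<^sub>v v = 0\<^sub>v m"
        using det_0_iff_vec_prod_zero_field[OF A] by auto
      then have "\<forall>b<m. vec_index v b = 0" using k mv[of v] by auto
      then have "v = 0\<^sub>v m" using v(1) by (auto simp: vec_eq_iff)
      then show False using v(2) by simp
    qed
  qed
qed

lemma gen_kernel:
  fixes E :: "nat \<Rightarrow> nat \<Rightarrow> ('i \<Rightarrow> real) \<Rightarrow> real"
  assumes fin: "finite I" and pf: "\<And>a b. a < m \<Longrightarrow> b < m \<Longrightarrow> polyfun I (E a b)"
    and ai: "alg_indep I x"
    and y0: "\<And>u. \<forall>a<m. (\<Sum>b<m. E a b y0 * u b) = 0 \<Longrightarrow> \<forall>b<m. u b = 0"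
  shows "\<forall>a<m. (\<Sum>b<m. E a b x * u b) = 0 \<Longrightarrow> \<forall>b<m. u b = 0"
    and "\<forall>b<m. (\<Sum>a<m. u a * E a b x) = 0 \<Longrightarrow> \<forall>a<m. u a = 0"
proof -
  define A where "A y = Matrix.mat m m (\<lambda>(a,b). E a b y)" for y
  have Ac: "A y \<in> carrier_mat m m" for y unfolding A_def by simp
  have "det (A y0) \<noteq> 0" unfolding det_nz_iff[OF Ac] using y0 by (simp add: A_def)
  moreover have "polyfun I (\<lambda>y. det (A y))" unfolding A_def by (rule polyfun_det[OF fin pf])
  ultimately have dx: "det (A x) \<noteq> 0" using polyfun_zero[OF _ ai] by blast
  then have k: "\<forall>u. (\<forall>a<m. (\<Sum>b<m. E a b x * u b) = 0) \<longrightarrow> (\<forall>b<m. u b = 0)"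
    unfolding det_nz_iff[OF Ac] by (simp add: A_def)
  then show "\<forall>a<m. (\<Sum>b<m. E a b x * u b) = 0 \<Longrightarrow> \<forall>b<m. u b = 0" by blast
  have Atc: "transpose_mat (A x) \<in> carrier_mat m m" using Ac by simp
  have "det (transpose_mat (A x)) \<noteq> 0" using dx det_transpose[OF Ac] by simp
  then have "\<forall>u. (\<forall>b<m. (\<Sum>a<m. E a b x * u a) = 0) \<longrightarrow> (\<forall>a<m. u a = 0)"
    unfolding det_nz_iff[OF Atc] by (simp add: A_def)
  then show "\<forall>b<m. (\<Sum>a<m. u a * E a b x) = 0 \<Longrightarrow> \<forall>a<m. u a = 0" by (simp add: mult.commute)
qed




definition QQ :: "nat set \<Rightarrow> (nat \<Rightarrow>\<^sub>C real) \<Rightarrow> real" where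
  "QQ C y = (\<Sum>c\<in>C. (apply_bcontfun y c)^2)"
definition BB :: "nat set \<Rightarrow> (nat \<Rightarrow>\<^sub>C real) \<Rightarrow> (nat \<Rightarrow>\<^sub>C real) \<Rightarrow> real" where
  "BB C y z = (\<Sum>c\<in>C. apply_bcontfun y c * apply_bcontfun z c)"

lemma apply_bcontfun_sum:
  "apply_bcontfun (\<Sum>x\<in>A. f x) c = (\<Sum>x\<in>A. apply_bcontfun (f x) c)"
  by (induction A rule: infinite_finite_induct) auto

lemma QQ_nonneg: "QQ C y \<ge> 0" unfolding QQ_def by (simp add: sum_nonneg)

lemma QQ_seg: "QQ C (p + s *\<^sub>R (w - p)) = QQ C p + 2 * s * (BB C w p - QQ C p) + s ^ 2 * QQ C (w - p)"
  unfolding QQ_def BB_def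
  by (simp add: sum.distrib sum_distrib_left sum_subtractf power2_eq_square algebra_simps)

lemma BB_self: "BB C p p = QQ C p" unfolding QQ_def BB_def by (simp add: power2_eq_square)

lemma cont_eval: "continuous_on S (\<lambda>y::nat \<Rightarrow>\<^sub>C real. apply_bcontfun y c)"
  unfolding continuous_on_iff
proof (intro ballI allI impI)
  fix x e assume "x \<in> S" "(0::real) < e"
  then show "\<exists>d>0. \<forall>x'\<in>S. dist x' x < d \<longrightarrow> dist (apply_bcontfun x' c) (apply_bcontfun x c) < e"
    using dist_bounded[of x' c x for x'] by (metis le_less_trans)
qed

lemma QQ_cont: "continuous_on S (QQ C)"
  unfolding QQ_def by (intro continuous_intros cont_eval)

lemma QQ_descent:
  assumes "BB C y p < QQ C p"
  shows "\<exists>\<sigma>. 0 < \<sigma> \<and> \<sigma> \<le> 1 \<and> QQ C (p + \<sigma> *\<^sub>R (y - p)) < QQ C p"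
proof -
  define \<delta> where "\<delta> = QQ C p - BB C y p"
  define Q' where "Q' = QQ C (y - p)"
  have d: "\<delta> > 0" using assms by (simp add: \<delta>_def)
  have q: "Q' \<ge> 0" by (simp add: Q'_def QQ_nonneg)
  define \<sigma> where "\<sigma> = min 1 (\<delta> / (Q' + 1))"
  have s0: "\<sigma> > 0" using d q by (simp add: \<sigma>_def)
  have s1: "\<sigma> \<le> 1" by (simp add: \<sigma>_def)
  have "\<sigma> * Q' \<le> \<delta> / (Q' + 1) * Q'" using q by (intro mult_right_mono) (auto simp: \<sigma>_def)
  also have "\<dots> \<le> \<delta>" using q d by (simp add: field_simps)
  finally have sq: "\<sigma> * Q' \<le> \<delta>" .
  have "QQ C (p + \<sigma> *\<^sub>R (y - p)) = QQ C p - 2 * \<sigma> * \<delta> + \<sigma> * (\<sigma> * Q')"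
    unfolding QQ_seg \<delta>_def Q'_def by (simp add: power2_eq_square algebra_simps)
  also have "\<dots> \<le> QQ C p - 2 * \<sigma> * \<delta> + \<sigma> * \<delta>" using sq s0 by (intro add_left_mono mult_left_mono) auto
  also have "\<dots> < QQ C p" using s0 d by simp
  finally show ?thesis using s0 s1 by blast
qed

lemma convex_seg: "convex K \<Longrightarrow> p \<in> K \<Longrightarrow> y \<in> K \<Longrightarrow> 0 \<le> \<sigma> \<Longrightarrow> \<sigma> \<le> 1 \<Longrightarrow> p + \<sigma> *\<^sub>R (y - p) \<in> K"
proof -
  assume a: "convex K" "p \<in> K" "y \<in> K" "0 \<le> \<sigma>" "\<sigma> \<le> 1"
  have "p + \<sigma> *\<^sub>R (y - p) = (1 - \<sigma>) *\<^sub>R p + \<sigma> *\<^sub>R y" by (simp add: algebra_simps)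
  then show ?thesis using a convexD[of K p y "1 - \<sigma>" \<sigma>] by simp
qed

lemma colourful_cara:
  fixes w :: "nat \<Rightarrow> nat \<Rightarrow> (nat \<Rightarrow>\<^sub>C real)" and C :: "nat set"
  assumes r: "r > 0" and finC: "finite C" and npos: "n > 0"
    and sum0: "\<And>i c. i \<in> {1..n} \<Longrightarrow> c \<in> C \<Longrightarrow> (\<Sum>k<r. apply_bcontfun (w i k) c) = 0"
    and gen: "\<And>s q. (\<forall>i\<in>{1..n}. s i < r) \<Longrightarrow> \<not> (\<forall>i\<in>{1..n}. (\<Sum>c\<in>C. apply_bcontfun (w i (s i)) c * q c) = 1)"
  shows "\<exists>s lam. (\<forall>i\<in>{1..n}. s i < r) \<and> (\<forall>i\<in>{1..n}. lam i \<ge> 0) \<and> (\<Sum>i=1..n. lam i) = 1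
     \<and> (\<forall>c\<in>C. (\<Sum>i=1..n. lam i * apply_bcontfun (w i (s i)) c) = 0)"
proof -
  define Sch where "Sch = {1..n} \<rightarrow>\<^sub>E {0..<r}"
  have finS: "finite Sch" unfolding Sch_def by (simp add: finite_PiE)
  have neS: "Sch \<noteq> {}" unfolding Sch_def using r by (simp add: PiE_eq_empty_iff)
  define T where "T s = (\<lambda>i. w i (s i)) ` {1..n}" for s
  define K where "K s = convex hull (T s)" for s
  have finT: "finite (T s)" for s unfolding T_def by simp
  have compK: "compact (K s)" for s unfolding K_def by (rule finite_imp_compact_convex_hull[OF finT])
  have convK: "convex (K s)" for s unfolding K_def by simp
  have TK: "T s \<subseteq> K s" for s unfolding K_def by (rule hull_subset)
  have ex: "\<exists>p. p \<in> K s \<and> (\<forall>y\<in>K s. QQ C p \<le> QQ C y)" if "n > 0" for s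
  proof -
    have "K s \<noteq> {}" using TK[of s] that unfolding T_def by auto
    then show ?thesis using continuous_attains_inf[OF compK _ QQ_cont] by blast
  qed
  show ?thesis
  proof (cases "n = 0")
    case True
    then show ?thesis using npos by simp
  next
    case False
    then have n: "n > 0" by simp
    define pm where "pm s = (SOME p. p \<in> K s \<and> (\<forall>y\<in>K s. QQ C p \<le> QQ C y))" for s
    have pm: "pm s \<in> K s" "\<And>y. y \<in> K s \<Longrightarrow> QQ C (pm s) \<le> QQ C y" for s
      using someI_ex[OF ex[OF n, of s]] unfolding pm_def by blast+
    define val where "val s = QQ C (pm s)" for s
    obtain s0 where s0: "s0 \<in> Sch" "\<And>s. s \<in> Sch \<Longrightarrow> val s0 \<le> val s"
    proof -
      have "Min (val ` Sch) \<in> val ` Sch" using finS neS by simp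
      then obtain s0 where "s0 \<in> Sch" "val s0 = Min (val ` Sch)" by auto
      then show ?thesis using that finS by simp
    qed
    have s0r: "\<forall>i\<in>{1..n}. s0 i < r" using s0(1) unfolding Sch_def by auto
    define p where "p = pm s0"
    define t where "t i = w i (s0 i)" for i
    have Tt: "T s0 = t ` {1..n}" unfolding T_def t_def by simp
    obtain \<mu> where mu: "\<forall>x\<in>T s0. 0 \<le> \<mu> x" "sum \<mu> (T s0) = 1" "(\<Sum>x\<in>T s0. \<mu> x *\<^sub>R x) = p"
      using pm(1)[of s0] unfolding p_def K_def convex_hull_finite[OF finT] by blast
    have Qp0: "QQ C p = 0"
    proof (rule ccontr)
      assume "QQ C p \<noteq> 0"
      then have Qp: "QQ C p > 0" using QQ_nonneg[of C p] by simp
      have var: "BB C y p \<ge> QQ C p" if y: "y \<in> K s0" for y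
      proof (rule ccontr)
        assume "\<not> ?thesis"
        then have "BB C y p < QQ C p" by simp
        then obtain \<sigma> where sg: "0 < \<sigma>" "\<sigma> \<le> 1" "QQ C (p + \<sigma> *\<^sub>R (y - p)) < QQ C p"
          using QQ_descent[of C y p] by blast
        have "p + \<sigma> *\<^sub>R (y - p) \<in> K s0" using convex_seg[OF convK _ y] pm(1) sg unfolding p_def by simp
        then show False using pm(2)[of "p + \<sigma> *\<^sub>R (y - p)" s0] sg(3) unfolding p_def by simp
      qed
      obtain k where k: "k \<in> {1..n}" "BB C (t k) p \<noteq> QQ C p"
      proof (rule ccontr)
        assume "\<not> thesis"
        then have all: "\<forall>i\<in>{1..n}. BB C (t i) p = QQ C p" using that by blast
        define q where "q c = apply_bcontfun p c / QQ C p" for c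
        have "\<forall>i\<in>{1..n}. (\<Sum>c\<in>C. apply_bcontfun (w i (s0 i)) c * q c) = 1"
        proof
          fix i assume i: "i \<in> {1..n}"
          have "(\<Sum>c\<in>C. apply_bcontfun (w i (s0 i)) c * q c) = BB C (t i) p / QQ C p"
            unfolding q_def BB_def t_def by (simp add: sum_divide_distrib)
          then show "(\<Sum>c\<in>C. apply_bcontfun (w i (s0 i)) c * q c) = 1" using all i Qp by simp
        qed
        then show False using gen[OF s0r] by blast
      qed
      have tkK: "t k \<in> K s0" using TK[of s0] k(1) unfolding Tt by auto
      have gt: "BB C (t k) p > QQ C p" using var[OF tkK] k(2) by simp
      have BBlin: "BB C (\<Sum>x\<in>T s0. \<mu> x *\<^sub>R x) p = (\<Sum>x\<in>T s0. \<mu> x * BB C x p)"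
      proof -
        have "BB C (\<Sum>x\<in>T s0. \<mu> x *\<^sub>R x) p = (\<Sum>c\<in>C. \<Sum>x\<in>T s0. \<mu> x * (apply_bcontfun x c * apply_bcontfun p c))"
          unfolding BB_def apply_bcontfun_sum by (simp add: sum_distrib_right mult.assoc)
        also have "\<dots> = (\<Sum>x\<in>T s0. \<Sum>c\<in>C. \<mu> x * (apply_bcontfun x c * apply_bcontfun p c))" by (rule sum.swap)
        also have "\<dots> = (\<Sum>x\<in>T s0. \<mu> x * BB C x p)" unfolding BB_def by (simp add: sum_distrib_left)
        finally show ?thesis .
      qed
      have "(\<Sum>x\<in>T s0. \<mu> x * (BB C x p - QQ C p)) = (\<Sum>x\<in>T s0. \<mu> x * BB C x p) - QQ C p"
      proof -
        have "(\<Sum>x\<in>T s0. \<mu> x * (BB C x p - QQ C p)) = (\<Sum>x\<in>T s0. \<mu> x * BB C x p) - (\<Sum>x\<in>T s0. \<mu> x) * QQ C p"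
          by (simp add: right_diff_distrib sum_subtractf sum_distrib_right)
        then show ?thesis using mu(2) by simp
      qed
      also have "\<dots> = BB C p p - QQ C p" using BBlin unfolding mu(3) by simp
      also have "\<dots> = 0" unfolding BB_self by simp
      finally have z: "(\<Sum>x\<in>T s0. \<mu> x * (BB C x p - QQ C p)) = 0" .
      have nn: "\<forall>x\<in>T s0. 0 \<le> \<mu> x * (BB C x p - QQ C p)"
      proof
        fix x assume x: "x \<in> T s0"
        then have "x \<in> K s0" using TK[of s0] by blast
        then have "BB C x p - QQ C p \<ge> 0" using var by simp
        moreover have "\<mu> x \<ge> 0" using mu(1) x by blast
        ultimately show "0 \<le> \<mu> x * (BB C x p - QQ C p)" by simp
      qed
      have iff: "(\<Sum>x\<in>T s0. \<mu> x * (BB C x p - QQ C p)) = 0 \<longleftrightarrow> (\<forall>x\<in>T s0. \<mu> x * (BB C x p - QQ C p) = 0)"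
        by (rule sum_nonneg_eq_0_iff[OF finT]) (use nn in blast)
      have "\<forall>x\<in>T s0. \<mu> x * (BB C x p - QQ C p) = 0" using iff z by blast
      moreover have tkT: "t k \<in> T s0" using k(1) unfolding Tt by blast
      ultimately have "\<mu> (t k) * (BB C (t k) p - QQ C p) = 0" by blast
      then have mk: "\<mu> (t k) = 0" using gt by simp
      define U where "U = {x\<in>T s0. \<mu> x \<noteq> 0}"
      have UT: "U \<subseteq> t ` ({1..n} - {k})"
      proof
        fix x assume "x \<in> U"
        then obtain i where "i \<in> {1..n}" "x = t i" "\<mu> x \<noteq> 0" unfolding U_def Tt by auto
        then show "x \<in> t ` ({1..n} - {k})" using mk by auto
      qed
      have finU: "finite U" unfolding U_def using finT by simp
      have pU: "p = (\<Sum>x\<in>U. \<mu> x *\<^sub>R x)"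
        unfolding mu(3)[symmetric] U_def by (rule sum.mono_neutral_right[OF finT]) auto
      have sU: "sum \<mu> U = 1"
        unfolding mu(2)[symmetric] U_def by (rule sum.mono_neutral_left[OF finT]) auto
      have pH: "p \<in> convex hull (t ` ({1..n} - {k}))"
      proof -
        have h: "U \<subseteq> convex hull (t ` ({1..n} - {k}))" by (rule order_trans[OF UT hull_subset])
        have "(\<Sum>x\<in>U. \<mu> x *\<^sub>R x) \<in> convex hull (t ` ({1..n} - {k}))"
        proof (rule convex_sum[OF finU convex_convex_hull sU])
          fix i assume "i \<in> U"
          then show "0 \<le> \<mu> i" using mu(1) unfolding U_def by blast
        next
          fix i assume "i \<in> U"
          then show "i \<in> convex hull (t ` ({1..n} - {k}))" using h by (rule subsetD[rotated])
        qed
        then show ?thesis using pU by simp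
      qed
      have "(\<Sum>j<r. BB C (w k j) p) = (\<Sum>c\<in>C. (\<Sum>j<r. apply_bcontfun (w k j) c) * apply_bcontfun p c)"
      proof -
        have "(\<Sum>j<r. BB C (w k j) p) = (\<Sum>j<r. \<Sum>c\<in>C. apply_bcontfun (w k j) c * apply_bcontfun p c)"
          unfolding BB_def ..
        also have "\<dots> = (\<Sum>c\<in>C. \<Sum>j<r. apply_bcontfun (w k j) c * apply_bcontfun p c)" by (rule sum.swap)
        also have "\<dots> = (\<Sum>c\<in>C. (\<Sum>j<r. apply_bcontfun (w k j) c) * apply_bcontfun p c)" by (simp add: sum_distrib_right)
        finally show ?thesis .
      qed
      also have "\<dots> = 0" using sum0[OF k(1)] by simp
      finally have sj: "(\<Sum>j<r. BB C (w k j) p) = 0" .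
      obtain j where j: "j < r" "BB C (w k j) p \<le> 0"
      proof (rule ccontr)
        assume "\<not> thesis"
        note th = that
        have pos: "BB C (w k j) p > 0" if jr: "j \<in> {..<r}" for j
        proof (rule ccontr)
          assume "\<not> 0 < BB C (w k j) p"
          then have "BB C (w k j) p \<le> 0" by simp
          then show False using th[of j] jr \<open>\<not> thesis\<close> by simp
        qed
        have "(\<Sum>j<r. BB C (w k j) p) > 0" by (rule sum_pos) (use pos r in auto)
        then show False using sj by simp
      qed
      define s' where "s' = s0(k := j)"
      have s'S: "s' \<in> Sch" using s0(1) k(1) j(1) unfolding Sch_def s'_def by (auto simp: PiE_iff extensional_def)
      have sub: "t ` ({1..n} - {k}) \<subseteq> T s'"
      proof
        fix x assume "x \<in> t ` ({1..n} - {k})"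
        then obtain i where i: "i \<in> {1..n}" "i \<noteq> k" "x = t i" by blast
        then have "x = w i (s' i)" unfolding t_def s'_def by simp
        then show "x \<in> T s'" unfolding T_def using i(1) by blast
      qed
      have "w k j = w k (s' k)" by (simp add: s'_def)
      then have wT: "w k j \<in> T s'" unfolding T_def using k(1) by blast
      have pK': "p \<in> K s'" using pH hull_mono[OF sub] unfolding K_def by blast
      have wK': "w k j \<in> K s'" using wT TK by blast
      have "BB C (w k j) p < QQ C p" using j(2) Qp by linarith
      then obtain \<sigma> where sg: "0 < \<sigma>" "\<sigma> \<le> 1" "QQ C (p + \<sigma> *\<^sub>R (w k j - p)) < QQ C p"
        using QQ_descent[of C "w k j" p] by blast
      have "p + \<sigma> *\<^sub>R (w k j - p) \<in> K s'" using convex_seg[OF convK pK' wK'] sg by simp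
      then have "QQ C (pm s') \<le> QQ C (p + \<sigma> *\<^sub>R (w k j - p))" by (rule pm(2))
      then have "val s' < val s0" using sg(3) unfolding val_def p_def by linarith
      then show False using s0(2)[OF s'S] by simp
    qed
    have pz: "\<forall>c\<in>C. apply_bcontfun p c = 0"
    proof -
      have "\<forall>c\<in>C. (apply_bcontfun p c)^2 = 0"
        using Qp0 sum_nonneg_eq_0_iff[OF finC, of "\<lambda>c. (apply_bcontfun p c)^2"] unfolding QQ_def by auto
      then show ?thesis by simp
    qed
    define rep where "rep x = (SOME i. i \<in> {1..n} \<and> t i = x)" for x
    have rep: "rep x \<in> {1..n}" "t (rep x) = x" if "x \<in> T s0" for x
    proof -
      have "\<exists>i. i \<in> {1..n} \<and> t i = x" using that unfolding Tt by blast
      from someI_ex[OF this] have "rep x \<in> {1..n} \<and> t (rep x) = x" unfolding rep_def .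
      then show "rep x \<in> {1..n}" "t (rep x) = x" by blast+
    qed
    have injr: "inj_on rep (T s0)"
    proof (rule inj_onI)
      fix x y assume "x \<in> T s0" "y \<in> T s0" "rep x = rep y"
      then show "x = y" using rep(2)[of x] rep(2)[of y] by metis
    qed
    define lam where "lam i = (if i \<in> rep ` T s0 then \<mu> (t i) else 0)" for i
    have sub: "rep ` T s0 \<subseteq> {1..n}" using rep(1) by blast
    have gensum: "(\<Sum>i=1..n. lam i * f (t i)) = (\<Sum>x\<in>T s0. \<mu> x * f x)" for f
    proof -
      have "(\<Sum>i=1..n. lam i * f (t i)) = (\<Sum>i\<in>rep ` T s0. lam i * f (t i))"
      proof (rule sum.mono_neutral_right[OF _ sub])
        show "\<forall>i\<in>{1..n} - rep ` T s0. lam i * f (t i) = 0" unfolding lam_def by simp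
      qed simp
      also have "\<dots> = (\<Sum>i\<in>rep ` T s0. \<mu> (t i) * f (t i))"
        by (rule sum.cong) (simp_all add: lam_def)
      also have "\<dots> = (\<Sum>x\<in>T s0. \<mu> (t (rep x)) * f (t (rep x)))" using sum.reindex[OF injr, of "\<lambda>i. \<mu> (t i) * f (t i)"] by (simp add: o_def)
      also have "\<dots> = (\<Sum>x\<in>T s0. \<mu> x * f x)" by (rule sum.cong) (simp_all add: rep(2))
      finally show ?thesis .
    qed
    show ?thesis
    proof (intro exI conjI)
      show "\<forall>i\<in>{1..n}. s0 i < r" by (rule s0r)
      show "\<forall>i\<in>{1..n}. lam i \<ge> 0"
      proof
        fix i assume "i \<in> {1..n}"
        show "lam i \<ge> 0"
        proof (cases "i \<in> rep ` T s0")
          case True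
          then obtain x where x: "x \<in> T s0" "i = rep x" by blast
          then have "t i = x" using rep(2) by simp
          then show ?thesis using mu(1) x(1) True unfolding lam_def by simp
        qed (simp add: lam_def)
      qed
      show "(\<Sum>i=1..n. lam i) = 1" using gensum[of "\<lambda>_. 1"] mu(2) by simp
      show "\<forall>c\<in>C. (\<Sum>i=1..n. lam i * apply_bcontfun (w i (s0 i)) c) = 0"
      proof
        fix c assume c: "c \<in> C"
        have "(\<Sum>i=1..n. lam i * apply_bcontfun (w i (s0 i)) c) = (\<Sum>x\<in>T s0. \<mu> x * apply_bcontfun x c)"
          using gensum[of "\<lambda>x. apply_bcontfun x c"] unfolding t_def by simp
        also have "\<dots> = apply_bcontfun p c" unfolding mu(3)[symmetric] apply_bcontfun_sum by simp
        finally show "(\<Sum>i=1..n. lam i * apply_bcontfun (w i (s0 i)) c) = 0" using pz c by simp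
      qed
    qed
  qed
qed




lemma rot_bij: "r > 0 \<Longrightarrow> bij_betw (\<lambda>k. (a + k) mod r) {..<r} {..<(r::nat)}"
proof -
  assume r: "r > 0"
  have inj: "inj_on (\<lambda>k. (a + k) mod r) {..<r}"
  proof (rule inj_onI)
    fix k k' assume k: "k \<in> {..<r}" "k' \<in> {..<r}" and e: "(a + k) mod r = (a + k') mod r"
    show "k = k'"
    proof (rule ccontr)
      assume ne: "k \<noteq> k'"
      define lo where "lo = min k k'"
      define hi where "hi = max k k'"
      have lh: "lo < hi" "hi < r" using ne k unfolding lo_def hi_def by auto
      have "(a + hi) mod r = (a + lo) mod r" using e unfolding lo_def hi_def by (cases "k \<le> k'") auto
      then have "r dvd (a + hi) - (a + lo)" using mod_eq_dvd_iff_nat[of "a + lo" "a + hi" r] lh by simp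
      then have "r dvd hi - lo" by simp
      moreover have "0 < hi - lo" "hi - lo < r" using lh by auto
      ultimately show False using nat_dvd_not_less by blast
    qed
  qed
  have "(\<lambda>k. (a + k) mod r) ` {..<r} \<subseteq> {..<r}" using r by auto
  then have "(\<lambda>k. (a + k) mod r) ` {..<r} = {..<r}" using endo_inj_surj[OF _ _ inj] by simp
  then show ?thesis using inj unfolding bij_betw_def by simp
qed

lemma rot_sum: "r > 0 \<Longrightarrow> (\<Sum>k<r. f ((a + k) mod r)) = (\<Sum>k<(r::nat). (f k :: real))"
proof -
  assume "r > 0"
  from rot_bij[OF this, of a] show ?thesis by (rule sum.reindex_bij_betw)
qed

lemma rot_inj: "r > 0 \<Longrightarrow> a < r \<Longrightarrow> a' < r \<Longrightarrow> (a + k) mod r = (a' + k) mod (r::nat) \<Longrightarrow> a = a'"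
proof -
  assume r: "r > 0" and a: "a < r" "a' < r" and e: "(a + k) mod r = (a' + k) mod (r::nat)"
  have inj: "inj_on (\<lambda>x. (k + x) mod r) {..<r}" using rot_bij[OF r, of k] unfolding bij_betw_def by blast
  have "(k + a) mod r = (k + a') mod r" using e by (simp only: add.commute)
  from inj_onD[OF inj this] a show "a = a'" by simp
qed

lemma fin_bcont: "(\<lambda>c::nat. if c < N then e c else (0::real)) \<in> bcontfun"
proof (rule bcontfun_normI)
  show "continuous_on UNIV (\<lambda>c::nat. if c < N then e c else (0::real))" by simp
  fix c :: nat
  show "norm (if c < N then e c else 0) \<le> (\<Sum>c<N. \<bar>e c\<bar>)"
  proof (cases "c < N")
    case True
    then show ?thesis using member_le_sum[of c "{..<N}" "\<lambda>c. \<bar>e c\<bar>"] by simp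
  qed (simp add: sum_nonneg)
qed

lemma apply_fin_bcont: "apply_bcontfun (Bcontfun (\<lambda>c::nat. if c < N then e c else (0::real))) c = (if c < N then e c else 0)"
  using Bcontfun_inverse[OF fin_bcont] by simp

lemma sum_shift1: "(\<Sum>i=1..n. f i) = (\<Sum>a<n. f (Suc a))"
proof (induction n)
  case (Suc n)
  have "(\<Sum>i=1..Suc n. f i) = (\<Sum>i=1..n. f i) + f (Suc n)" by (rule sum.cl_ivl_Suc[THEN trans]) simp
  also have "\<dots> = (\<Sum>a<n. f (Suc a)) + f (Suc n)" using Suc by simp
  also have "\<dots> = (\<Sum>a<Suc n. f (Suc a))" by simp
  finally show ?case .
qed simp

locale cfg =
  fixes F :: "nat \<Rightarrow> (real^'d) set" and r n :: nat and g :: "nat \<Rightarrow> 'd" and ord :: "nat \<Rightarrow> nat \<Rightarrow> real^'d"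
  assumes r2: "r \<ge> 2" and nN: "n = (r - 1) * CARD('d) + 1"
    and disj: "\<forall>i\<in>{1..n}. \<forall>i'\<in>{1..n}. i \<noteq> i' \<longrightarrow> F i \<inter> F i' = {}"
    and gbij: "bij_betw g {0..<CARD('d)} UNIV"
    and ordb: "\<And>i. i \<in> {1..n} \<Longrightarrow> bij_betw (ord i) {0..<r} (F i)"
begin

definition "N = (r - 1) * CARD('d)"
definition "jc c = c div CARD('d) + 1"
definition "lc c = g (c mod CARD('d))"
definition "tau k i a = ord i ((a + k) mod r)"

lemma nN': "n = N + 1" using nN by (simp add: N_def)
lemma rpos: "r > 0" using r2 by simp
lemma dpos: "CARD('d) > 0" by simp

lemma jc_range: "c < N \<Longrightarrow> 1 \<le> jc c \<and> jc c < r"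
proof -
  assume c: "c < N"
  have "c div CARD('d) < r - 1" using c dpos unfolding N_def by (simp add: div_less_iff_less_mult mult.commute)
  then show ?thesis unfolding jc_def by simp
qed

lemma jl_inj: "c < N \<Longrightarrow> c' < N \<Longrightarrow> jc c = jc c' \<Longrightarrow> lc c = lc c' \<Longrightarrow> c = c'"
proof -
  assume "c < N" "c' < N" "jc c = jc c'" "lc c = lc c'"
  then have 1: "c div CARD('d) = c' div CARD('d)" unfolding jc_def by simp
  have "c mod CARD('d) \<in> {0..<CARD('d)}" "c' mod CARD('d) \<in> {0..<CARD('d)}" using dpos by auto
  then have 2: "c mod CARD('d) = c' mod CARD('d)"
    using \<open>lc c = lc c'\<close> gbij unfolding lc_def bij_betw_def inj_on_def by blast
  have "c = c div CARD('d) * CARD('d) + c mod CARD('d)" by simp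
  also have "\<dots> = c' div CARD('d) * CARD('d) + c' mod CARD('d)" using 1 2 by simp
  also have "\<dots> = c'" by simp
  finally show "c = c'" .
qed

lemma jl_surj: "1 \<le> a \<Longrightarrow> a < r \<Longrightarrow> \<exists>c<N. jc c = a \<and> lc c = l"
proof -
  assume a: "1 \<le> a" "a < r"
  have "l \<in> g ` {0..<CARD('d)}" using gbij unfolding bij_betw_def by simp
  then obtain m where m: "m < CARD('d)" "g m = l" by auto
  define c where "c = (a - 1) * CARD('d) + m"
  have "c < (a - 1) * CARD('d) + CARD('d)" using m unfolding c_def by simp
  also have "\<dots> = a * CARD('d)" using a by (cases a) auto
  also have "\<dots> \<le> (r - 1) * CARD('d)" using a by simp
  finally have "c < N" unfolding N_def .
  moreover have "c div CARD('d) = a - 1" unfolding c_def using m by simp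
  moreover have "c mod CARD('d) = m" unfolding c_def using m by simp
  ultimately show ?thesis unfolding jc_def lc_def using a m by (intro exI[of _ c]) simp
qed

lemma tau_in: "i \<in> {1..n} \<Longrightarrow> a < r \<Longrightarrow> tau k i a \<in> F i"
  using ordb[of i] rpos unfolding tau_def bij_betw_def by auto

lemma tau_inj: "i \<in> {1..n} \<Longrightarrow> a < r \<Longrightarrow> a' < r \<Longrightarrow> tau k i a = tau k i a' \<Longrightarrow> a = a'"
proof -
  assume i: "i \<in> {1..n}" and a: "a < r" "a' < r" and e: "tau k i a = tau k i a'"
  have "(a + k) mod r = (a' + k) mod r"
    using e ordb[OF i] rpos unfolding tau_def bij_betw_def inj_on_def by simp
  then show "a = a'" using rot_inj[OF rpos a] by simp
qed


lemma tau_bij: "i \<in> {1..n} \<Longrightarrow> bij_betw (tau k i) {..<r} (F i)"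
proof -
  assume i: "i \<in> {1..n}"
  have "bij_betw (ord i \<circ> (\<lambda>a. (a + k) mod r)) {..<r} (F i)"
    by (rule bij_betw_trans[OF _ ordb[OF i]]) (use rot_bij[OF rpos, of k] in \<open>simp add: add.commute lessThan_atLeast0\<close>)
  then show ?thesis unfolding tau_def o_def .
qed

lemma same_colour: "i \<in> {1..n} \<Longrightarrow> i' \<in> {1..n} \<Longrightarrow> y \<in> F i \<Longrightarrow> y \<in> F i' \<Longrightarrow> i = i'"
  using disj by blast

end



lemma polyfun_if: "(P \<Longrightarrow> polyfun I f) \<Longrightarrow> (\<not> P \<Longrightarrow> polyfun I g) \<Longrightarrow> polyfun I (\<lambda>y. if P then f y else g y)"
  by (cases P) simp_all

lemma polyfun_one: "polyfun I (\<lambda>y. 1)" using polyfun_const[of I 1] by simp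
lemma polyfun_zero': "polyfun I (\<lambda>y. 0)" using polyfun_const[of I 0] by simp
lemma polyfun_mone: "polyfun I (\<lambda>y. -1)" using polyfun_const[of I "-1"] by (simp add: of_rat_minus)

context cfg
begin

definition "II = (\<Union>i\<in>{1..n}. F i) \<times> (UNIV :: 'd set)"
definition VV :: "(nat \<Rightarrow> nat) \<Rightarrow> nat \<Rightarrow> nat \<Rightarrow> ((real^'d) \<times> 'd \<Rightarrow> real) \<Rightarrow> real" where
  "VV s i c y = y (tau (s i) i (jc c), lc c) - y (tau (s i) i 0, lc c)"
definition "E1 s k a b y = (if b < N then VV s (Suc a) b y else (if Suc a = k then 1 else 0))"
definition "E2 s e a b y = (if b = 0 then e (Suc a) else VV s (Suc a) (b - 1) y)"
definition "pos k i = (if i < k then i - 1 else i - 2)"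
definition "y0 s k = (\<lambda>(p,l). if \<exists>i\<in>{1..n}. i \<noteq> k \<and> p = tau (s i) i (jc (pos k i)) \<and> l = lc (pos k i) then 1 else (0::real))"

lemma finF: "i \<in> {1..n} \<Longrightarrow> finite (F i)"
  using ordb[of i] bij_betw_finite by blast

lemma finII: "finite II" unfolding II_def using finF by simp

lemma polyfun_VV: "i \<in> {1..n} \<Longrightarrow> c < N \<Longrightarrow> polyfun II (VV s i c)"
proof -
  assume i: "i \<in> {1..n}" and c: "c < N"
  have "(tau (s i) i (jc c), lc c) \<in> II" using tau_in[OF i] jc_range[OF c] i unfolding II_def by blast
  moreover have "(tau (s i) i 0, lc c) \<in> II" using tau_in[OF i] rpos i unfolding II_def by blast
  ultimately show ?thesis unfolding VV_def
    by (intro polyfun_diff finII polyfun_var)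
qed

lemma polyfun_E1: "a < n \<Longrightarrow> b < n \<Longrightarrow> polyfun II (E1 s k a b)"
proof -
  assume a: "a < n" and b: "b < n"
  have i: "Suc a \<in> {1..n}" using a by simp
  show ?thesis unfolding E1_def
    by (intro polyfun_if polyfun_VV[OF i] polyfun_one polyfun_zero')
qed

lemma polyfun_E2: "\<forall>i. e i = 1 \<or> e i = -1 \<Longrightarrow> a < n \<Longrightarrow> b < n \<Longrightarrow> polyfun II (E2 s e a b)"
proof -
  assume e: "\<forall>i. e i = 1 \<or> e i = -1" and a: "a < n" and b: "b < n"
  have i: "Suc a \<in> {1..n}" using a by simp
  have pe: "polyfun II (\<lambda>y. e (Suc a))" using e polyfun_one polyfun_mone by metis
  have "b \<noteq> 0 \<Longrightarrow> b - 1 < N" using b nN' by simp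
  then show ?thesis unfolding E2_def
    by (intro polyfun_if polyfun_VV[OF i] pe) auto
qed

lemma pos_lt: "k \<in> {1..n} \<Longrightarrow> i \<in> {1..n} \<Longrightarrow> i \<noteq> k \<Longrightarrow> pos k i < N"
  using nN' unfolding pos_def by auto

lemma pos_surj: "k \<in> {1..n} \<Longrightarrow> b < N \<Longrightarrow> \<exists>i\<in>{1..n}. i \<noteq> k \<and> pos k i = b"
proof -
  assume k: "k \<in> {1..n}" and b: "b < N"
  show ?thesis
  proof (cases "Suc b < k")
    case True
    then show ?thesis using b nN' unfolding pos_def by (intro bexI[of _ "Suc b"]) auto
  next
    case False
    then show ?thesis using b nN' unfolding pos_def by (intro bexI[of _ "Suc (Suc b)"]) auto
  qed
qed

lemma y0_base: "i \<in> {1..n} \<Longrightarrow> k \<in> {1..n} \<Longrightarrow> y0 s k (tau (s i) i 0, l) = 0"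
proof -
  assume i: "i \<in> {1..n}" and k: "k \<in> {1..n}"
  have "\<not> (\<exists>i'\<in>{1..n}. i' \<noteq> k \<and> tau (s i) i 0 = tau (s i') i' (jc (pos k i')) \<and> l = lc (pos k i'))"
  proof
    assume "\<exists>i'\<in>{1..n}. i' \<noteq> k \<and> tau (s i) i 0 = tau (s i') i' (jc (pos k i')) \<and> l = lc (pos k i')"
    then obtain i' where i': "i' \<in> {1..n}" "i' \<noteq> k" "tau (s i) i 0 = tau (s i') i' (jc (pos k i'))" by blast
    have pl: "pos k i' < N" by (rule pos_lt[OF k i'(1) i'(2)])
    have jr: "1 \<le> jc (pos k i')" "jc (pos k i') < r" using jc_range[OF pl] by auto
    have "tau (s i) i 0 \<in> F i" by (rule tau_in[OF i rpos])
    moreover have "tau (s i) i 0 \<in> F i'" unfolding i'(3) by (rule tau_in[OF i'(1) jr(2)])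
    ultimately have ii: "i = i'" by (rule same_colour[OF i i'(1)])
    have "0 = jc (pos k i')" using tau_inj[OF i rpos] jr(2) i'(3) unfolding ii by blast
    then show False using jr(1) by simp
  qed
  then show ?thesis unfolding y0_def by simp
qed

lemma y0_top: "i \<in> {1..n} \<Longrightarrow> k \<in> {1..n} \<Longrightarrow> c < N \<Longrightarrow>
    y0 s k (tau (s i) i (jc c), lc c) = (if i \<noteq> k \<and> c = pos k i then 1 else 0)"
proof -
  assume i: "i \<in> {1..n}" and k: "k \<in> {1..n}" and c: "c < N"
  have jcr: "jc c < r" using jc_range[OF c] by simp
  have eqv: "(\<exists>i'\<in>{1..n}. i' \<noteq> k \<and> tau (s i) i (jc c) = tau (s i') i' (jc (pos k i')) \<and> lc c = lc (pos k i'))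
        \<longleftrightarrow> (i \<noteq> k \<and> c = pos k i)"
  proof
    assume "\<exists>i'\<in>{1..n}. i' \<noteq> k \<and> tau (s i) i (jc c) = tau (s i') i' (jc (pos k i')) \<and> lc c = lc (pos k i')"
    then obtain i' where i': "i' \<in> {1..n}" "i' \<noteq> k" "tau (s i) i (jc c) = tau (s i') i' (jc (pos k i'))"
      "lc c = lc (pos k i')" by blast
    have pl: "pos k i' < N" by (rule pos_lt[OF k i'(1) i'(2)])
    have jr: "jc (pos k i') < r" using jc_range[OF pl] by auto
    have "tau (s i) i (jc c) \<in> F i" by (rule tau_in[OF i jcr])
    moreover have "tau (s i) i (jc c) \<in> F i'" unfolding i'(3) by (rule tau_in[OF i'(1) jr])
    ultimately have ii: "i = i'" by (rule same_colour[OF i i'(1)])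
    have "jc c = jc (pos k i')" using tau_inj[OF i jcr jr] i'(3) unfolding ii by blast
    then have "c = pos k i'" using jl_inj[OF c pl] i'(4) by blast
    then show "i \<noteq> k \<and> c = pos k i" using ii i'(2) by simp
  next
    assume "i \<noteq> k \<and> c = pos k i"
    then show "\<exists>i'\<in>{1..n}. i' \<noteq> k \<and> tau (s i) i (jc c) = tau (s i') i' (jc (pos k i')) \<and> lc c = lc (pos k i')"
      using i by blast
  qed
  show ?thesis unfolding y0_def using eqv by simp
qed

lemma VV_y0: "i \<in> {1..n} \<Longrightarrow> k \<in> {1..n} \<Longrightarrow> c < N \<Longrightarrow> VV s i c (y0 s k) = (if i \<noteq> k \<and> c = pos k i then 1 else 0)"
  unfolding VV_def using y0_top[of i k c s] y0_base[of i k s "lc c"] by simp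

lemma sum_VV_y0: "i \<in> {1..n} \<Longrightarrow> k \<in> {1..n} \<Longrightarrow>
   (\<Sum>b<N. VV s i b (y0 s k) * u b) = (if i \<noteq> k then u (pos k i) else 0)"
proof -
  assume i: "i \<in> {1..n}" and k: "k \<in> {1..n}"
  have "(\<Sum>b<N. VV s i b (y0 s k) * u b) = (\<Sum>b<N. if i \<noteq> k \<and> b = pos k i then u b else 0)"
    by (rule sum.cong) (simp_all add: VV_y0[OF i k])
  also have "\<dots> = (if i \<noteq> k then u (pos k i) else 0)"
  proof (cases "i \<noteq> k")
    case True
    have "pos k i \<in> {..<N}" using pos_lt[OF k i True] by simp
    then show ?thesis using True by (simp add: sum.delta')
  qed simp
  finally show ?thesis .
qed

end



context cfg
begin

lemma ker_E1_y0:
  assumes k: "k \<in> {1..n}" and H: "\<forall>a<n. (\<Sum>b<n. E1 s k a b (y0 s k) * u b) = 0"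
  shows "\<forall>b<n. u b = 0"
proof -
  have row: "(\<Sum>b<n. E1 s k a b (y0 s k) * u b) = (if Suc a \<noteq> k then u (pos k (Suc a)) else 0) + (if Suc a = k then u N else 0)"
    if a: "a < n" for a
  proof -
    have i: "Suc a \<in> {1..n}" using a by simp
    have "(\<Sum>b<n. E1 s k a b (y0 s k) * u b) = (\<Sum>b<N. E1 s k a b (y0 s k) * u b) + E1 s k a N (y0 s k) * u N"
      unfolding nN' by simp
    also have "(\<Sum>b<N. E1 s k a b (y0 s k) * u b) = (\<Sum>b<N. VV s (Suc a) b (y0 s k) * u b)"
      by (rule sum.cong) (simp_all add: E1_def)
    also have "\<dots> = (if Suc a \<noteq> k then u (pos k (Suc a)) else 0)" by (rule sum_VV_y0[OF i k])
    also have "E1 s k a N (y0 s k) * u N = (if Suc a = k then u N else 0)" by (simp add: E1_def)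
    finally show ?thesis .
  qed
  have uN: "u N = 0"
  proof -
    have "k - 1 < n" "Suc (k - 1) = k" using k by auto
    then show ?thesis using H row[of "k - 1"] by simp
  qed
  have upos: "u (pos k i) = 0" if i: "i \<in> {1..n}" "i \<noteq> k" for i
  proof -
    have "i - 1 < n" "Suc (i - 1) = i" using i by auto
    then show ?thesis using H row[of "i - 1"] i(2) by simp
  qed
  show ?thesis
  proof (intro allI impI)
    fix b assume b: "b < n"
    show "u b = 0"
    proof (cases "b < N")
      case True
      then obtain i where "i \<in> {1..n}" "i \<noteq> k" "pos k i = b" using pos_surj[OF k] by blast
      then show ?thesis using upos by blast
    next
      case False
      then have "b = N" using b nN' by simp
      then show ?thesis using uN by simp
    qed
  qed
qed

lemma n_in: "n \<in> {1..n}" using nN' by simp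

lemma ker_E2_y0:
  assumes e: "\<forall>i. e i = 1 \<or> e i = -1" and H: "\<forall>a<n. (\<Sum>b<n. E2 s e a b (y0 s n) * u b) = 0"
  shows "\<forall>b<n. u b = 0"
proof -
  have row: "(\<Sum>b<n. E2 s e a b (y0 s n) * u b) = e (Suc a) * u 0 + (if Suc a \<noteq> n then u (Suc (pos n (Suc a))) else 0)"
    if a: "a < n" for a
  proof -
    have i: "Suc a \<in> {1..n}" using a by simp
    have "(\<Sum>b<n. E2 s e a b (y0 s n) * u b) = E2 s e a 0 (y0 s n) * u 0 + (\<Sum>b<N. E2 s e a (Suc b) (y0 s n) * u (Suc b))"
      unfolding nN' Suc_eq_plus1[symmetric] by (rule sum.lessThan_Suc_shift)
    also have "(\<Sum>b<N. E2 s e a (Suc b) (y0 s n) * u (Suc b)) = (\<Sum>b<N. VV s (Suc a) b (y0 s n) * u (Suc b))"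
      by (rule sum.cong) (simp_all add: E2_def)
    also have "\<dots> = (if Suc a \<noteq> n then u (Suc (pos n (Suc a))) else 0)" by (rule sum_VV_y0[OF i n_in])
    also have "E2 s e a 0 (y0 s n) * u 0 = e (Suc a) * u 0" by (simp add: E2_def)
    finally show ?thesis .
  qed
  have u0: "u 0 = 0"
  proof -
    have "n - 1 < n" "Suc (n - 1) = n" using nN' by auto
    then have "e n * u 0 = 0" using H row[of "n - 1"] by simp
    then show ?thesis using e by (metis mult_eq_0_iff one_neq_zero neg_equal_0_iff_equal)
  qed
  show ?thesis
  proof (intro allI impI)
    fix b assume b: "b < n"
    show "u b = 0"
    proof (cases b)
      case 0
      then show ?thesis using u0 by simp
    next
      case (Suc a)
      then have a: "a < n" "Suc a \<noteq> n" using b nN' by auto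
      have "pos n (Suc a) = a" unfolding pos_def using a by simp
      then have "(\<Sum>b<n. E2 s e a b (y0 s n) * u b) = u (Suc a)" using row[OF a(1)] a(2) u0 by simp
      moreover have "(\<Sum>b<n. E2 s e a b (y0 s n) * u b) = 0" using H a(1) by blast
      ultimately show ?thesis using Suc by simp
    qed
  qed
qed

definition "x0 = (\<lambda>(p::real^'d, l::'d). p $ l)"

lemma VV_x0: "VV s i c x0 = tau (s i) i (jc c) $ lc c - tau (s i) i 0 $ lc c"
  unfolding VV_def x0_def by simp

lemma G1:
  assumes ai: "alg_indep II x0" and k: "k \<in> {1..n}"
    and H: "\<forall>b<n. (\<Sum>a<n. u a * E1 s k a b x0) = 0"
  shows "\<forall>a<n. u a = 0"
proof -
  have pf: "\<And>a b. a < n \<Longrightarrow> b < n \<Longrightarrow> polyfun II (E1 s k a b)" by (rule polyfun_E1)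
  have y: "\<And>u. \<forall>a<n. (\<Sum>b<n. E1 s k a b (y0 s k) * u b) = 0 \<Longrightarrow> \<forall>b<n. u b = 0" by (rule ker_E1_y0[OF k])
  show ?thesis by (rule gen_kernel(2)[OF finII pf ai y H])
qed

lemma G2r:
  assumes ai: "alg_indep II x0" and e: "\<forall>i. e i = 1 \<or> e i = -1"
    and H: "\<forall>a<n. (\<Sum>b<n. E2 s e a b x0 * u b) = 0"
  shows "\<forall>b<n. u b = 0"
proof -
  have pf: "\<And>a b. a < n \<Longrightarrow> b < n \<Longrightarrow> polyfun II (E2 s e a b)" by (rule polyfun_E2[OF e])
  have y: "\<And>u. \<forall>a<n. (\<Sum>b<n. E2 s e a b (y0 s n) * u b) = 0 \<Longrightarrow> \<forall>b<n. u b = 0" by (rule ker_E2_y0[OF e])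
  show ?thesis by (rule gen_kernel(1)[OF finII pf ai y H])
qed

lemma G2l:
  assumes ai: "alg_indep II x0" and e: "\<forall>i. e i = 1 \<or> e i = -1"
    and H: "\<forall>b<n. (\<Sum>a<n. u a * E2 s e a b x0) = 0"
  shows "\<forall>a<n. u a = 0"
proof -
  have pf: "\<And>a b. a < n \<Longrightarrow> b < n \<Longrightarrow> polyfun II (E2 s e a b)" by (rule polyfun_E2[OF e])
  have y: "\<And>u. \<forall>a<n. (\<Sum>b<n. E2 s e a b (y0 s n) * u b) = 0 \<Longrightarrow> \<forall>b<n. u b = 0" by (rule ker_E2_y0[OF e])
  show ?thesis by (rule gen_kernel(2)[OF finII pf ai y H])
qed

end



context cfg
begin

definition "eps M i = (if i \<in> M then 1 else -1::real)"
definition "ww M i k = Bcontfun (\<lambda>c. if c < N then eps M i * (tau k i (jc c) $ lc c - tau k i 0 $ lc c) else 0)"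

lemma eps_pm: "\<forall>i. eps M i = 1 \<or> eps M i = -1" unfolding eps_def by simp
lemma eps_sq: "eps M i * eps M i = 1" unfolding eps_def by simp

lemma apply_ww: "apply_bcontfun (ww M i k) c = (if c < N then eps M i * (tau k i (jc c) $ lc c - tau k i 0 $ lc c) else 0)"
  unfolding ww_def by (rule apply_fin_bcont)

lemma ww_VV: "c < N \<Longrightarrow> apply_bcontfun (ww M i (s i)) c = eps M i * VV s i c x0"
  unfolding apply_ww VV_x0 by simp

lemma sum0_ww: "i \<in> {1..n} \<Longrightarrow> c \<in> {0..<N} \<Longrightarrow> (\<Sum>k<r. apply_bcontfun (ww M i k) c) = 0"
proof -
  assume i: "i \<in> {1..n}" and c: "c \<in> {0..<N}"
  let ?f = "\<lambda>b. ord i b $ lc c"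
  have "(\<Sum>k<r. apply_bcontfun (ww M i k) c) = (\<Sum>k<r. eps M i * (?f ((jc c + k) mod r) - ?f ((0 + k) mod r)))"
    by (rule sum.cong) (use c in \<open>simp_all add: apply_ww tau_def\<close>)
  also have "\<dots> = eps M i * ((\<Sum>k<r. ?f ((jc c + k) mod r)) - (\<Sum>k<r. ?f ((0 + k) mod r)))"
    by (simp add: sum_distrib_left sum_subtractf right_diff_distrib)
  also have "\<dots> = 0" using rot_sum[OF rpos, of ?f "jc c"] rot_sum[OF rpos, of ?f 0] by simp
  finally show ?thesis .
qed

lemma E2_row: "a < n \<Longrightarrow> (\<Sum>b<n. E2 s e a b y * u b) = e (Suc a) * u 0 + (\<Sum>c<N. VV s (Suc a) c y * u (Suc c))"
proof -
  assume a: "a < n"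
  have "(\<Sum>b<n. E2 s e a b y * u b) = E2 s e a 0 y * u 0 + (\<Sum>b<N. E2 s e a (Suc b) y * u (Suc b))"
    unfolding nN' Suc_eq_plus1[symmetric] by (rule sum.lessThan_Suc_shift)
  also have "(\<Sum>b<N. E2 s e a (Suc b) y * u (Suc b)) = (\<Sum>c<N. VV s (Suc a) c y * u (Suc c))"
    by (rule sum.cong) (simp_all add: E2_def)
  finally show ?thesis by (simp add: E2_def)
qed

lemma gen_ww:
  assumes ai: "alg_indep II x0" and s: "\<forall>i\<in>{1..n}. s i < r"
  shows "\<not> (\<forall>i\<in>{1..n}. (\<Sum>c\<in>{0..<N}. apply_bcontfun (ww M i (s i)) c * q c) = 1)"
proof
  assume H: "\<forall>i\<in>{1..n}. (\<Sum>c\<in>{0..<N}. apply_bcontfun (ww M i (s i)) c * q c) = 1"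
  define u where "u b = (if b = 0 then -1 else q (b - 1))" for b
  have "\<forall>a<n. (\<Sum>b<n. E2 s (eps M) a b x0 * u b) = 0"
  proof (intro allI impI)
    fix a assume a: "a < n"
    have i: "Suc a \<in> {1..n}" using a by simp
    have "(\<Sum>c\<in>{0..<N}. apply_bcontfun (ww M (Suc a) (s (Suc a))) c * q c) = eps M (Suc a) * (\<Sum>c<N. VV s (Suc a) c x0 * q c)"
      unfolding sum_distrib_left by (rule sum.cong) (auto simp: ww_VV)
    then have "eps M (Suc a) * (\<Sum>c<N. VV s (Suc a) c x0 * q c) = 1" using H i by simp
    then have "eps M (Suc a) * (eps M (Suc a) * (\<Sum>c<N. VV s (Suc a) c x0 * q c)) = eps M (Suc a)" by simp
    then have sv: "(\<Sum>c<N. VV s (Suc a) c x0 * q c) = eps M (Suc a)" unfolding mult.assoc[symmetric] eps_sq by simp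
    show "(\<Sum>b<n. E2 s (eps M) a b x0 * u b) = 0" unfolding E2_row[OF a] using sv by (simp add: u_def)
  qed
  then have "\<forall>b<n. u b = 0" by (rule G2r[OF ai eps_pm])
  then show False using nN' by (auto simp: u_def)
qed

end



context cfg
begin

lemma final:
  assumes ai: "alg_indep II x0" and M: "M \<subseteq> {1..n}"
  shows "\<exists>A :: nat \<Rightarrow> (real ^ 'd) set. \<exists>x :: nat \<Rightarrow> nat \<Rightarrow> real ^ 'd.
           \<exists>z :: real ^ 'd. \<exists>\<alpha> :: nat \<Rightarrow> real.
           colourful_partition n r F A
           \<and> (\<forall>i\<in>{1..n}. \<forall>j\<in>{1..r}. F i \<inter> A j = {x i j})
           \<and> (\<forall>j\<in>{1..r}. z = (\<Sum>i=1..n. \<alpha> i *\<^sub>R x i j))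
           \<and> (\<Sum>i=1..n. \<alpha> i) = 1
           \<and> (((\<forall>i\<in>M. \<alpha> i > 0) \<and> (\<forall>i\<in>{1..n} - M. \<alpha> i < 0))
              \<or> ((\<forall>i\<in>M. \<alpha> i < 0) \<and> (\<forall>i\<in>{1..n} - M. \<alpha> i > 0)))"
proof -
  have npos: "n > 0" using nN' by simp
  obtain s lam where s: "\<forall>i\<in>{1..n}. s i < r" and lam0: "\<forall>i\<in>{1..n}. lam i \<ge> 0"
    and lam1: "(\<Sum>i=1..n. lam i) = 1"
    and cc: "\<forall>c\<in>{0..<N}. (\<Sum>i=1..n. lam i * apply_bcontfun (ww M i (s i)) c) = 0"
    using colourful_cara[of r "{0..<N}" n "ww M", OF rpos _ npos sum0_ww gen_ww[OF ai]] by auto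
  define \<beta> where "\<beta> i = eps M i * lam i" for i
  have R: "(\<Sum>i=1..n. \<beta> i * VV s i c x0) = 0" if c: "c < N" for c
  proof -
    have "(\<Sum>i=1..n. \<beta> i * VV s i c x0) = (\<Sum>i=1..n. lam i * apply_bcontfun (ww M i (s i)) c)"
      by (rule sum.cong) (simp_all add: \<beta>_def ww_VV[OF c])
    then show ?thesis using cc c by simp
  qed
  have lam_pos: "lam k > 0" if k: "k \<in> {1..n}" for k
  proof (rule ccontr)
    assume "\<not> lam k > 0"
    then have lk: "lam k = 0" using lam0 k by force
    define u where "u a = \<beta> (Suc a)" for a
    have "\<forall>b<n. (\<Sum>a<n. u a * E1 s k a b x0) = 0"
    proof (intro allI impI)
      fix b assume b: "b < n"
      show "(\<Sum>a<n. u a * E1 s k a b x0) = 0"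
      proof (cases "b < N")
        case True
        have "(\<Sum>a<n. u a * E1 s k a b x0) = (\<Sum>a<n. \<beta> (Suc a) * VV s (Suc a) b x0)"
          by (rule sum.cong) (simp_all add: u_def E1_def True)
        also have "\<dots> = (\<Sum>i=1..n. \<beta> i * VV s i b x0)" by (rule sum_shift1[symmetric])
        also have "\<dots> = 0" by (rule R[OF True])
        finally show ?thesis .
      next
        case False
        have "(\<Sum>a<n. u a * E1 s k a b x0) = (\<Sum>a<n. \<beta> (Suc a) * (if Suc a = k then 1 else 0))"
          by (rule sum.cong) (simp_all add: u_def E1_def False)
        also have "\<dots> = (\<Sum>i=1..n. \<beta> i * (if i = k then 1 else 0))" by (rule sum_shift1[symmetric])
        also have "\<dots> = (\<Sum>i=1..n. if i = k then \<beta> i else 0)" by (rule sum.cong) simp_all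
        also have "\<dots> = \<beta> k" using k by (simp add: sum.delta')
        also have "\<dots> = 0" using lk by (simp add: \<beta>_def)
        finally show ?thesis .
      qed
    qed
    then have "\<forall>a<n. u a = 0" by (rule G1[OF ai k])
    then have "\<forall>i\<in>{1..n}. lam i = 0"
    proof (intro ballI)
      fix i assume i: "i \<in> {1..n}" and z: "\<forall>a<n. u a = 0"
      have "i - 1 < n" "Suc (i - 1) = i" using i by auto
      then have "\<beta> i = 0" using z[rule_format, of "i - 1"] unfolding u_def by simp
      then show "lam i = 0" unfolding \<beta>_def eps_def by (simp split: if_splits)
    qed
    then have "(\<Sum>i=1..n. lam i) = 0" by simp
    then show False using lam1 by simp
  qed
  define B where "B = (\<Sum>i=1..n. \<beta> i)"
  have Bnz: "B \<noteq> 0"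
  proof
    assume B0: "B = 0"
    define u where "u a = \<beta> (Suc a)" for a
    have "\<forall>b<n. (\<Sum>a<n. u a * E2 s (\<lambda>_. 1) a b x0) = 0"
    proof (intro allI impI)
      fix b assume b: "b < n"
      show "(\<Sum>a<n. u a * E2 s (\<lambda>_. 1) a b x0) = 0"
      proof (cases b)
        case 0
        have "(\<Sum>a<n. u a * E2 s (\<lambda>_. 1) a b x0) = (\<Sum>a<n. \<beta> (Suc a))"
          by (rule sum.cong) (simp_all add: u_def E2_def 0)
        also have "\<dots> = B" unfolding B_def by (rule sum_shift1[symmetric])
        finally show ?thesis using B0 by simp
      next
        case (Suc c)
        then have c: "c < N" using b nN' by simp
        have "(\<Sum>a<n. u a * E2 s (\<lambda>_. 1) a b x0) = (\<Sum>a<n. \<beta> (Suc a) * VV s (Suc a) c x0)"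
          by (rule sum.cong) (simp_all add: u_def E2_def Suc)
        also have "\<dots> = (\<Sum>i=1..n. \<beta> i * VV s i c x0)" by (rule sum_shift1[symmetric])
        also have "\<dots> = 0" by (rule R[OF c])
        finally show ?thesis .
      qed
    qed
    moreover have "\<forall>i. (\<lambda>_. 1::real) i = 1 \<or> (\<lambda>_. 1::real) i = -1" by simp
    ultimately have z: "\<forall>a<n. u a = 0" using G2l[OF ai, where e="\<lambda>_. 1" and s=s and u=u] by blast
    have "\<beta> 1 = 0" using z[rule_format, of 0] npos unfolding u_def by simp
    moreover have "lam 1 > 0" using lam_pos npos by simp
    ultimately show False unfolding \<beta>_def eps_def by (simp split: if_splits)
  qed
  define \<alpha> where "\<alpha> i = \<beta> i / B" for i
  define x where "x i j = tau (s i) i (j - 1)" for i j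
  define A where "A j = (\<lambda>i. tau (s i) i (j - 1)) ` {1..n}" for j
  define z where "z = (\<Sum>i=1..n. \<alpha> i *\<^sub>R tau (s i) i 0)"
  have P1: "\<forall>i\<in>{1..n}. \<forall>j\<in>{1..r}. F i \<inter> A j = {x i j}"
  proof (intro ballI)
    fix i j assume i: "i \<in> {1..n}" and j: "j \<in> {1..r}"
    have jr: "j - 1 < r" using j by auto
    show "F i \<inter> A j = {x i j}"
    proof
      show "{x i j} \<subseteq> F i \<inter> A j" using tau_in[OF i jr] i unfolding x_def A_def by blast
      show "F i \<inter> A j \<subseteq> {x i j}"
      proof
        fix y assume y: "y \<in> F i \<inter> A j"
        then obtain i' where i': "i' \<in> {1..n}" "y = tau (s i') i' (j - 1)" unfolding A_def by blast
        have "y \<in> F i'" using tau_in[OF i'(1) jr] i'(2) by simp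
        then have "i = i'" using same_colour[OF i i'(1)] y by blast
        then show "y \<in> {x i j}" using i'(2) unfolding x_def by simp
      qed
    qed
  qed
  have P2: "colourful_partition n r F A"
    unfolding colourful_partition_def
  proof (intro conjI ballI impI)
    show "(\<Union>j\<in>{1..r}. A j) = (\<Union>i\<in>{1..n}. F i)"
    proof
      show "(\<Union>j\<in>{1..r}. A j) \<subseteq> (\<Union>i\<in>{1..n}. F i)"
      proof
        fix y assume "y \<in> (\<Union>j\<in>{1..r}. A j)"
        then obtain j i where j: "j \<in> {1..r}" and i: "i \<in> {1..n}" and y: "y = tau (s i) i (j - 1)"
          unfolding A_def by blast
        have "j - 1 < r" using j by auto
        then show "y \<in> (\<Union>i\<in>{1..n}. F i)" using tau_in[OF i] y i by blast
      qed
      show "(\<Union>i\<in>{1..n}. F i) \<subseteq> (\<Union>j\<in>{1..r}. A j)"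
      proof
        fix y assume "y \<in> (\<Union>i\<in>{1..n}. F i)"
        then obtain i where i: "i \<in> {1..n}" and y: "y \<in> F i" by blast
        have "y \<in> tau (s i) i ` {..<r}" using tau_bij[OF i, of "s i"] y unfolding bij_betw_def by simp
        then obtain a where a: "a < r" "tau (s i) i a = y" by auto
        have "Suc a \<in> {1..r}" using a by simp
        moreover have "y \<in> A (Suc a)" unfolding A_def using a i by force
        ultimately show "y \<in> (\<Union>j\<in>{1..r}. A j)" by blast
      qed
    qed
  next
    fix j j' assume j: "j \<in> {1..r}" and j': "j' \<in> {1..r}" and ne: "j \<noteq> j'"
    show "A j \<inter> A j' = {}"
    proof (rule ccontr)
      assume "A j \<inter> A j' \<noteq> {}"
      then obtain i i' where i: "i \<in> {1..n}" and i': "i' \<in> {1..n}"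
        and e: "tau (s i) i (j - 1) = tau (s i') i' (j' - 1)" unfolding A_def by blast
      have jr: "j - 1 < r" "j' - 1 < r" using j j' by auto
      have "tau (s i) i (j - 1) \<in> F i" by (rule tau_in[OF i jr(1)])
      moreover have "tau (s i) i (j - 1) \<in> F i'" unfolding e by (rule tau_in[OF i' jr(2)])
      ultimately have ii: "i = i'" by (rule same_colour[OF i i'])
      have "j - 1 = j' - 1" using tau_inj[OF i jr] e unfolding ii by blast
      then show False using ne j j' by auto
    qed
  next
    fix i j assume "i \<in> {1..n}" "j \<in> {1..r}"
    then show "card (F i \<inter> A j) = 1" using P1 by simp
  qed
  have P3: "\<forall>j\<in>{1..r}. z = (\<Sum>i=1..n. \<alpha> i *\<^sub>R x i j)"
  proof
    fix j assume j: "j \<in> {1..r}"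
    show "z = (\<Sum>i=1..n. \<alpha> i *\<^sub>R x i j)"
    proof (cases "j = 1")
      case True
      then show ?thesis unfolding z_def x_def by simp
    next
      case False
      define a where "a = j - 1"
      have a: "1 \<le> a" "a < r" using j False unfolding a_def by auto
      show ?thesis
      proof (rule Finite_Cartesian_Product.vec_eq_iff[THEN iffD2], rule allI)
        fix l
        obtain c where c: "c < N" "jc c = a" "lc c = l" using jl_surj[OF a] by blast
        have "(\<Sum>i=1..n. \<beta> i * (tau (s i) i a $ l - tau (s i) i 0 $ l)) = 0"
          using R[OF c(1)] unfolding VV_x0 c(2,3) .
        then have "(\<Sum>i=1..n. \<beta> i * tau (s i) i a $ l) = (\<Sum>i=1..n. \<beta> i * tau (s i) i 0 $ l)"
          by (simp add: right_diff_distrib sum_subtractf)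
        then have "(\<Sum>i=1..n. \<beta> i * tau (s i) i a $ l) / B = (\<Sum>i=1..n. \<beta> i * tau (s i) i 0 $ l) / B" by simp
        then have "(\<Sum>i=1..n. \<alpha> i * tau (s i) i a $ l) = (\<Sum>i=1..n. \<alpha> i * tau (s i) i 0 $ l)"
          unfolding \<alpha>_def sum_divide_distrib by simp
        then show "z $ l = (\<Sum>i=1..n. \<alpha> i *\<^sub>R x i j) $ l"
          unfolding z_def x_def a_def by simp
      qed
    qed
  qed
  have P4: "(\<Sum>i=1..n. \<alpha> i) = 1"
    unfolding \<alpha>_def sum_divide_distrib[symmetric] B_def[symmetric] using Bnz by simp
  have P5: "((\<forall>i\<in>M. \<alpha> i > 0) \<and> (\<forall>i\<in>{1..n} - M. \<alpha> i < 0))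
              \<or> ((\<forall>i\<in>M. \<alpha> i < 0) \<and> (\<forall>i\<in>{1..n} - M. \<alpha> i > 0))"
  proof -
    have bM: "\<beta> i > 0" if "i \<in> M" for i using that M lam_pos unfolding \<beta>_def eps_def by auto
    have bN: "\<beta> i < 0" if "i \<in> {1..n} - M" for i using that lam_pos unfolding \<beta>_def eps_def by auto
    show ?thesis
    proof (cases "B > 0")
      case True
      then show ?thesis using bM bN unfolding \<alpha>_def by (simp add: divide_pos_pos divide_neg_pos)
    next
      case False
      then have "B < 0" using Bnz by simp
      then show ?thesis using bM bN unfolding \<alpha>_def by (simp add: divide_pos_neg divide_neg_neg)
    qed
  qed
  show ?thesis using P1 P2 P3 P4 P5 by blast
qed

end

theorem mainTheorem6:
  fixes F :: "nat \<Rightarrow> (real ^ 'd) set" and r n :: nat and M :: "nat set"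
  assumes "r \<ge> 2"
    and "n = (r - 1) * CARD('d) + 1"
    and "\<forall>i\<in>{1..n}. \<forall>i'\<in>{1..n}. i \<noteq> i' \<longrightarrow> F i \<inter> F i' = {}"
    and "\<forall>i\<in>{1..n}. finite (F i) \<and> card (F i) = r"
    and "alg_indep ((\<Union>i\<in>{1..n}. F i) \<times> (UNIV :: 'd set)) (\<lambda>(p, k). p $ k)"
    and "M \<subseteq> {1..n}"
  shows "\<exists>A :: nat \<Rightarrow> (real ^ 'd) set. \<exists>x :: nat \<Rightarrow> nat \<Rightarrow> real ^ 'd.
           \<exists>z :: real ^ 'd. \<exists>\<alpha> :: nat \<Rightarrow> real.
           colourful_partition n r F A
           \<and> (\<forall>i\<in>{1..n}. \<forall>j\<in>{1..r}. F i \<inter> A j = {x i j})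
           \<and> (\<forall>j\<in>{1..r}. z = (\<Sum>i=1..n. \<alpha> i *\<^sub>R x i j))
           \<and> (\<Sum>i=1..n. \<alpha> i) = 1
           \<and> (((\<forall>i\<in>M. \<alpha> i > 0) \<and> (\<forall>i\<in>{1..n} - M. \<alpha> i < 0))
              \<or> ((\<forall>i\<in>M. \<alpha> i < 0) \<and> (\<forall>i\<in>{1..n} - M. \<alpha> i > 0)))"
  proof -
  note a = assms
  have "finite (UNIV :: 'd set)" by simp
  then obtain g :: "nat \<Rightarrow> 'd" where g: "bij_betw g {0..<CARD('d)} UNIV"
    using ex_bij_betw_nat_finite[of "UNIV :: 'd set"] by auto
  define ord where "ord i = (SOME h. bij_betw h {0..<r} (F i))" for i
  have ordb: "bij_betw (ord i) {0..<r} (F i)" if i: "i \<in> {1..n}" for i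
  proof -
    have "finite (F i)" "card (F i) = r" using a(4) i by auto
    then have "\<exists>h. bij_betw h {0..<r} (F i)" using ex_bij_betw_nat_finite[of "F i"] by auto
    then show ?thesis unfolding ord_def by (rule someI_ex)
  qed
  interpret cfg F r n g ord
    by (unfold_locales) (use a(1) a(2) a(3) g ordb in auto)
  have ai: "alg_indep II x0" unfolding II_def x0_def using a(5) .
  show ?thesis by (rule final[OF ai a(6)])
qed

end
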